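(* The following five $9$-dimensional complex Lie algebras are mutually non-isomorphic. Each has basis $\mathbf x_1,\dots,\mathbf x_7,\mathbf y_1,\mathbf y_2$, with the listed nonzero brackets (together with those obtained by antisymmetry) and all other brackets of basis elements equal to zero: (1) $N^{9,2}_1$: $[\mathbf x_1,\mathbf x_2]=[\mathbf x_4,\mathbf x_5]=[\mathbf x_6,\mathbf x_7]=\mathbf y_1$, $[\mathbf x_3,\mathbf x_7]=\mathbf y_2$; (2) $N^{9,2}_2$: $[\mathbf x_2,\mathbf x_7]=[\mathbf x_4,\mathbf x_5]=\mathbf y_1$, $[\mathbf x_1,\mathbf x_3]=[\mathbf x_6,\mathbf x_7]=\mathbf y_2$; (3) $N^{9,2}_3$: $[\mathbf x_1,\mathbf x_2]=[\mathbf x_3,\mathbf x_7]=[\mathbf x_5,\mathbf x_6]=\mathbf y_1$, $[\mathbf x_4,\mathbf x_6]=[\mathbf x_5,\mathbf x_7]=\mathbf y_2$; (4) $N^{9,2}_4$: $[\mathbf x_7,\mathbf x_2]=[\mathbf x_4,\mathbf x_5]=[\mathbf x_6,\mathbf x_1]=\mathbf y_1$, $[\mathbf x_7,\mathbf x_3]=[\mathbf x_5,\mathbf x_6]=\mathbf y_2$; (5) $N^{9,2}_5$: $[\mathbf x_1,\mathbf x_7]=[\mathbf x_3,\mathbf x_4]=[\mathbf x_5,\mathbf x_6]=\mathbf y_1$, $[\mathbf x_7,\mathbf x_3]=[\mathbf x_4,\mathbf x_5]=[\mathbf x_6,\mathbf x_2]=\mathbf y_2$. *)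

theory Defs
  imports Complex_Main
begin

datatype bidx = X1 | X2 | X3 | X4 | X5 | X6 | X7 | Y1 | Y2

lemma UNIV_bidx: "(UNIV :: bidx set) = {X1, X2, X3, X4, X5, X6, X7, Y1, Y2}"
  by (auto intro: bidx.exhaust)

instance bidx :: finite
  by standard (simp add: UNIV_bidx)

type_synonym vec9 = "bidx \<Rightarrow> complex"

text \<open>Structure constants from a list of relations [a,b] = c (a triple (a,b,c));
  the brackets obtained by antisymmetry get sign -1; all others are zero.
  sc L i j k is the coefficient of basis vector k in [e_i, e_j].\<close>
definition sc :: "(bidx \<times> bidx \<times> bidx) list \<Rightarrow> bidx \<Rightarrow> bidx \<Rightarrow> bidx \<Rightarrow> complex" where
  "sc L i j k = (if (i, j, k) \<in> set L then 1 else if (j, i, k) \<in> set L then -1 else 0)"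

definition lbr :: "(bidx \<Rightarrow> bidx \<Rightarrow> bidx \<Rightarrow> complex) \<Rightarrow> vec9 \<Rightarrow> vec9 \<Rightarrow> vec9" where
  "lbr c u v = (\<lambda>k. \<Sum>i\<in>UNIV. \<Sum>j\<in>UNIV. u i * v j * c i j k)"

definition clinear9 :: "(vec9 \<Rightarrow> vec9) \<Rightarrow> bool" where
  "clinear9 f \<longleftrightarrow> (\<forall>u v. f (\<lambda>k. u k + v k) = (\<lambda>k. f u k + f v k)) \<and>
                    (\<forall>a u. f (\<lambda>k. a * u k) = (\<lambda>k. a * f u k))"

definition lie_isomorphic :: "(bidx \<Rightarrow> bidx \<Rightarrow> bidx \<Rightarrow> complex) \<Rightarrow> (bidx \<Rightarrow> bidx \<Rightarrow> bidx \<Rightarrow> complex) \<Rightarrow> bool" where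
  "lie_isomorphic c d \<longleftrightarrow> (\<exists>f. clinear9 f \<and> bij f \<and> (\<forall>u v. f (lbr c u v) = lbr d (f u) (f v)))"

definition N92 :: "nat \<Rightarrow> bidx \<Rightarrow> bidx \<Rightarrow> bidx \<Rightarrow> complex" where
  "N92 n = (if n = 1 then sc [(X1,X2,Y1),(X4,X5,Y1),(X6,X7,Y1),(X3,X7,Y2)]
       else if n = 2 then sc [(X2,X7,Y1),(X4,X5,Y1),(X1,X3,Y2),(X6,X7,Y2)]
       else if n = 3 then sc [(X1,X2,Y1),(X3,X7,Y1),(X5,X6,Y1),(X4,X6,Y2),(X5,X7,Y2)]
       else if n = 4 then sc [(X7,X2,Y1),(X4,X5,Y1),(X6,X1,Y1),(X7,X3,Y2),(X5,X6,Y2)]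
       else sc [(X1,X7,Y1),(X3,X4,Y1),(X5,X6,Y1),(X7,X3,Y2),(X4,X5,Y2),(X6,X2,Y2)])"

end

theory Submission
  imports Defs "HOL-Library.Function_Algebras"
begin


definition smul :: "complex \<Rightarrow> vec9 \<Rightarrow> vec9" where "smul a u = (\<lambda>k. a * u k)"

interpretation V: vector_space smul
  by unfold_locales (auto simp: smul_def fun_eq_iff algebra_simps)

definition ev :: "bidx \<Rightarrow> vec9" where "ev j = (\<lambda>i. if i = j then 1 else 0)"

definition w :: "bidx \<Rightarrow> bidx \<Rightarrow> vec9 \<Rightarrow> vec9 \<Rightarrow> complex" where
  "w a b u v = u a * v b - u b * v a"

lemma lbr1: "lbr (N92 1) u v = (\<lambda>k. if k = Y1 then w X1 X2 u v + w X4 X5 u v + w X6 X7 u v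
   else if k = Y2 then w X3 X7 u v else 0)"
  unfolding lbr_def N92_def sc_def w_def
  apply (rule ext) subgoal for k by (cases k) (simp_all add: UNIV_bidx algebra_simps)
  done
lemma lbr2: "lbr (N92 2) u v = (\<lambda>k. if k = Y1 then w X2 X7 u v + w X4 X5 u v
   else if k = Y2 then w X1 X3 u v + w X6 X7 u v else 0)"
  unfolding lbr_def N92_def sc_def w_def
  apply (rule ext) subgoal for k by (cases k) (simp_all add: UNIV_bidx algebra_simps)
  done
lemma lbr3: "lbr (N92 3) u v = (\<lambda>k. if k = Y1 then w X1 X2 u v + w X3 X7 u v + w X5 X6 u v
   else if k = Y2 then w X4 X6 u v + w X5 X7 u v else 0)"
  unfolding lbr_def N92_def sc_def w_def
  apply (rule ext) subgoal for k by (cases k) (simp_all add: UNIV_bidx algebra_simps)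
  done
lemma lbr4: "lbr (N92 4) u v = (\<lambda>k. if k = Y1 then w X7 X2 u v + w X4 X5 u v + w X6 X1 u v
   else if k = Y2 then w X7 X3 u v + w X5 X6 u v else 0)"
  unfolding lbr_def N92_def sc_def w_def
  apply (rule ext) subgoal for k by (cases k) (simp_all add: UNIV_bidx algebra_simps)
  done
lemma lbr5: "lbr (N92 5) u v = (\<lambda>k. if k = Y1 then w X1 X7 u v + w X3 X4 u v + w X5 X6 u v
   else if k = Y2 then w X7 X3 u v + w X4 X5 u v + w X6 X2 u v else 0)"
  unfolding lbr_def N92_def sc_def w_def
  apply (rule ext) subgoal for k by (cases k) (simp_all add: UNIV_bidx algebra_simps)
  done




lemma sum_fun_apply: "(sum f A :: vec9) k = (\<Sum>a\<in>A. f a k)"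
  by (induction A rule: infinite_finite_induct) auto

lemma ev_inj: "inj ev"
  by (auto simp: inj_def ev_def fun_eq_iff split: if_splits)

lemma indep_ev: "V.independent (ev ` A)"
proof -
  have fin: "finite (ev ` A)" by simp
  show ?thesis
  proof
    assume "V.dependent (ev ` A)"
    then obtain u where u: "\<exists>v\<in>ev ` A. u v \<noteq> 0" "(\<Sum>v\<in>ev ` A. smul (u v) v) = 0"
      using V.dependent_finite[OF fin] by blast
    then obtain a where a: "a \<in> A" "u (ev a) \<noteq> 0" by blast
    have "0 = (\<Sum>v\<in>ev ` A. smul (u v) v) a" using u(2) by simp
    also have "\<dots> = (\<Sum>b\<in>A. u (ev b) * ev b a)"
      by (simp add: sum_fun_apply sum.reindex[OF inj_on_subset[OF ev_inj]] smul_def)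
    also have "\<dots> = (\<Sum>b\<in>{a}. u (ev b) * ev b a)"
      by (rule sum.mono_neutral_right) (auto simp: ev_def a)
    also have "\<dots> = u (ev a)" by (simp add: ev_def)
    finally show False using a by simp
  qed
qed

definition Kset :: "(bidx \<Rightarrow> bidx \<Rightarrow> bidx \<Rightarrow> complex) \<Rightarrow> vec9 \<Rightarrow> vec9 set" where
  "Kset c z = {u. \<forall>v. \<exists>a. lbr c u v = smul a z}"

definition bigK :: "(bidx \<Rightarrow> bidx \<Rightarrow> bidx \<Rightarrow> complex) \<Rightarrow> nat \<Rightarrow> vec9 \<Rightarrow> bool" where
  "bigK c m z \<longleftrightarrow> (\<exists>S. S \<subseteq> Kset c z \<and> V.independent S \<and> finite S \<and> card S = m)"

definition isoP where
  "isoP f c d \<longleftrightarrow> clinear9 f \<and> bij f \<and> (\<forall>u v. f (lbr c u v) = lbr d (f u) (f v))"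

lemma lie_iso_iff: "lie_isomorphic c d \<longleftrightarrow> (\<exists>f. isoP f c d)"
  by (simp add: lie_isomorphic_def isoP_def)

lemma iso_add: "isoP f c d \<Longrightarrow> f (u + v) = f u + f v"
  unfolding isoP_def clinear9_def plus_fun_def by simp

lemma iso_smul: "isoP f c d \<Longrightarrow> f (smul a u) = smul a (f u)"
  unfolding isoP_def clinear9_def smul_def by simp

lemma iso_hom: assumes "isoP f c d" shows "module_hom smul smul f"
  unfolding module_hom_iff using V.module_axioms iso_add[OF assms] iso_smul[OF assms] by blast

lemma iso_zero: "isoP f c d \<Longrightarrow> f 0 = 0"
proof -
  assume h: "isoP f c d"
  have "f (smul 0 0) = smul 0 (f 0)" by (rule iso_smul[OF h])
  moreover have "smul 0 (0::vec9) = 0" "smul 0 (f 0) = 0" by (auto simp: smul_def)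
  ultimately show ?thesis by simp
qed

lemma iso_sym: assumes h: "isoP f c d" shows "isoP (inv f) d c"
proof -
  have b: "bij f" and br: "\<And>u v. f (lbr c u v) = lbr d (f u) (f v)" using h by (auto simp: isoP_def)
  have fi: "f (inv f x) = x" for x using b by (simp add: bij_is_surj surj_f_inv_f)
  have if': "inv f (f x) = x" for x using b by (simp add: bij_is_inj inv_f_f)
  have "inv f (u + v) = inv f u + inv f v" for u v
  proof -
    have "inv f (u + v) = inv f (f (inv f u + inv f v))" by (simp add: iso_add[OF h] fi)
    also have "\<dots> = inv f u + inv f v" by (rule if')
    finally show ?thesis .
  qed
  moreover have "inv f (smul a u) = smul a (inv f u)" for a u
  proof -
    have "inv f (smul a u) = inv f (f (smul a (inv f u)))" by (simp add: iso_smul[OF h] fi)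
    also have "\<dots> = smul a (inv f u)" by (rule if')
    finally show ?thesis .
  qed
  moreover have "inv f (lbr d u v) = lbr c (inv f u) (inv f v)" for u v
  proof -
    have "inv f (lbr d u v) = inv f (f (lbr c (inv f u) (inv f v)))" by (simp add: br fi)
    also have "\<dots> = lbr c (inv f u) (inv f v)" by (rule if')
    finally show ?thesis .
  qed
  moreover have "bij (inv f)" using b by (simp add: bij_imp_bij_inv)
  ultimately have A1: "\<And>u v. inv f (u + v) = inv f u + inv f v"
    and A2: "\<And>a u. inv f (smul a u) = smul a (inv f u)"
    and A3: "\<And>u v. inv f (lbr d u v) = lbr c (inv f u) (inv f v)" and A4: "bij (inv f)" by blast+
  have "inv f (\<lambda>k. u k + v k) = (\<lambda>k. inv f u k + inv f v k)" for u v
    using A1[of u v] unfolding plus_fun_def .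
  moreover have "inv f (\<lambda>k. a * u k) = (\<lambda>k. a * inv f u k)" for a u
    using A2[of a u] unfolding smul_def .
  ultimately show ?thesis unfolding isoP_def clinear9_def using A3 A4 by blast
qed

lemma iso_Kset: assumes h: "isoP f c d" shows "f ` Kset c z \<subseteq> Kset d (f z)"
proof
  fix x assume "x \<in> f ` Kset c z"
  then obtain u where u: "u \<in> Kset c z" "x = f u" by blast
  have b: "bij f" and br: "\<And>u v. f (lbr c u v) = lbr d (f u) (f v)" using h by (auto simp: isoP_def)
  have "\<exists>a. lbr d (f u) v = smul a (f z)" for v
  proof -
    obtain y where y: "v = f y" using b by (metis bij_is_surj surjD)
    obtain a where "lbr c u y = smul a z" using u unfolding Kset_def by blast
    then have "lbr d (f u) v = smul a (f z)" using y br iso_smul[OF h] by metis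
    then show ?thesis by blast
  qed
  then show "x \<in> Kset d (f z)" using u by (simp add: Kset_def)
qed

lemma iso_bigK: assumes h: "isoP f c d" and "bigK c m z" shows "bigK d m (f z)"
proof -
  obtain S where S: "S \<subseteq> Kset c z" "V.independent S" "finite S" "card S = m"
    using assms(2) unfolding bigK_def by blast
  interpret F: module_hom smul smul f by (rule iso_hom[OF h])
  have inj: "inj f" using h by (simp add: isoP_def bij_is_inj)
  have "f ` S \<subseteq> Kset d (f z)" using iso_Kset[OF h] S(1) by blast
  moreover have "V.independent (f ` S)"
    by (rule F.independent_injective_image[OF S(2)]) (use inj in \<open>auto intro: inj_on_subset\<close>)
  moreover have "card (f ` S) = m" using S inj by (simp add: card_image inj_on_subset)
  ultimately show ?thesis unfolding bigK_def using S(3) by blast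
qed


definition eqs where
  "eqs c s t u \<longleftrightarrow> (\<forall>j. s * lbr c u (ev j) Y1 + t * lbr c u (ev j) Y2 = 0)"


definition center :: "vec9 \<Rightarrow> bool" where
  "center z \<longleftrightarrow> (\<exists>k. k \<noteq> Y1 \<and> k \<noteq> Y2 \<and> z k \<noteq> 0) \<or> (z Y1 = 0 \<and> z Y2 = 0)"

definition xo where "xo c \<longleftrightarrow> (\<forall>u v k. k \<noteq> Y1 \<longrightarrow> k \<noteq> Y2 \<longrightarrow> lbr c u v k = 0)"

lemma K_eqs: assumes "u \<in> Kset c z" shows "eqs c (z Y2) (- z Y1) u"
  unfolding eqs_def
proof
  fix j
  obtain a where a: "lbr c u (ev j) = smul a z" using assms unfolding Kset_def by blast
  show "z Y2 * lbr c u (ev j) Y1 + - z Y1 * lbr c u (ev j) Y2 = 0"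
    by (simp add: a smul_def)
qed

lemma K_center: assumes x: "xo c" and u: "u \<in> Kset c z" and cz: "center z" shows "eqs c s t u"
  unfolding eqs_def
proof
  fix j
  obtain a where a: "lbr c u (ev j) = smul a z" using u unfolding Kset_def by blast
  have "lbr c u (ev j) Y1 = 0 \<and> lbr c u (ev j) Y2 = 0"
  proof (cases "z Y1 = 0 \<and> z Y2 = 0")
    case True then show ?thesis by (simp add: a smul_def)
  next
    case False
    then obtain k where k: "k \<noteq> Y1" "k \<noteq> Y2" "z k \<noteq> 0" using cz center_def by blast
    have "lbr c u (ev j) k = 0" using x k unfolding xo_def by blast
    then have "a = 0" using k a by (simp add: smul_def)
    then show ?thesis by (simp add: a smul_def)
  qed
  then show "s * lbr c u (ev j) Y1 + t * lbr c u (ev j) Y2 = 0" by simp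
qed

lemma K_cover:
  assumes x: "xo c"
    and gen: "\<And>s t u. P s t \<Longrightarrow> eqs c s t u \<Longrightarrow> u \<in> V.span (G s t)"
    and deg: "\<And>s t u. (s, t) \<noteq> (0, 0) \<Longrightarrow> \<not> P s t \<Longrightarrow> eqs c s t u \<Longrightarrow> u \<in> V.span (Dg s t)"
    and p0: "P s0 t0"
  shows "Kset c z \<subseteq> V.span (if center z then G s0 t0 else if P (z Y2) (- z Y1) then G (z Y2) (- z Y1) else Dg (z Y2) (- z Y1))"
proof
  fix u assume u: "u \<in> Kset c z"
  show "u \<in> V.span (if center z then G s0 t0 else if P (z Y2) (- z Y1) then G (z Y2) (- z Y1) else Dg (z Y2) (- z Y1))"
  proof (cases "center z")
    case True then show ?thesis using gen[OF p0 K_center[OF x u True]] by simp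
  next
    case False
    then have nz: "(z Y2, - z Y1) \<noteq> (0, 0)" by (auto simp: center_def)
    show ?thesis using False gen[OF _ K_eqs[OF u]] deg[OF nz _ K_eqs[OF u]] by auto
  qed
qed

lemma no_big: assumes "Kset c z \<subseteq> V.span T" "finite T" "card T < m" shows "\<not> bigK c m z"
proof
  assume "bigK c m z"
  then obtain S where S: "S \<subseteq> Kset c z" "V.independent S" "finite S" "card S = m"
    unfolding bigK_def by blast
  have "card S \<le> card T" using V.independent_span_bound[OF assms(2) S(2)] S(1) assms(1) by blast
  then show False using S assms by simp
qed

lemma span3: "u = smul a p + smul b q + smul c r \<Longrightarrow> u \<in> V.span {p, q, r}"
  by (simp only:) (intro V.span_add V.span_scale V.span_base; simp)

lemma span5: "u = smul a p + smul b q + smul c r + smul d x + smul e y \<Longrightarrow> u \<in> V.span {p, q, r, x, y}"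
  by (simp only:) (intro V.span_add V.span_scale V.span_base; simp)

lemma card3: "card {a, b, c} \<le> 3" by (auto simp: card_insert_if)
lemma card5: "card {a, b, c, d, e} \<le> 5" by (auto simp: card_insert_if)

lemma E_inst: assumes "eqs c s t u"
  shows "s * lbr c u (ev j) Y1 + t * lbr c u (ev j) Y2 = 0" using assms eqs_def by blast

lemma xo1: "xo (N92 1)" unfolding xo_def lbr1 by simp

lemma eqs1: assumes "eqs (N92 1) s t u"
  shows "s * u X2 = 0" "s * u X1 = 0" "t * u X7 = 0" "s * u X5 = 0" "s * u X4 = 0" "s * u X7 = 0"
    "s * u X6 + t * u X3 = 0"
  using E_inst[OF assms, of X1, unfolded lbr1] E_inst[OF assms, of X2, unfolded lbr1] E_inst[OF assms, of X3, unfolded lbr1] E_inst[OF assms, of X4, unfolded lbr1]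
    E_inst[OF assms, of X5, unfolded lbr1] E_inst[OF assms, of X6, unfolded lbr1] E_inst[OF assms, of X7, unfolded lbr1]
  by (simp_all add: w_def ev_def)


lemma xo2: "xo (N92 2)" unfolding xo_def lbr2 by simp

lemma eqs2: assumes "eqs (N92 2) s t u"
  shows "t * u X3 = 0" "s * u X7 = 0" "t * u X1 = 0" "s * u X5 = 0" "s * u X4 = 0" "t * u X7 = 0" "s * u X2 + t * u X6 = 0"
  using E_inst[OF assms, of X1, unfolded lbr2] E_inst[OF assms, of X2, unfolded lbr2] E_inst[OF assms, of X3, unfolded lbr2] E_inst[OF assms, of X4, unfolded lbr2] E_inst[OF assms, of X5, unfolded lbr2] E_inst[OF assms, of X6, unfolded lbr2] E_inst[OF assms, of X7, unfolded lbr2]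
  by (simp_all add: w_def ev_def algebra_simps neg_eq_iff_add_eq_0)

lemma xo3: "xo (N92 3)" unfolding xo_def lbr3 by simp

lemma eqs3: assumes "eqs (N92 3) s t u"
  shows "s * u X2 = 0" "s * u X1 = 0" "s * u X7 = 0" "t * u X6 = 0" "s * u X6 + t * u X7 = 0" "s * u X5 + t * u X4 = 0" "s * u X3 + t * u X5 = 0"
  using E_inst[OF assms, of X1, unfolded lbr3] E_inst[OF assms, of X2, unfolded lbr3] E_inst[OF assms, of X3, unfolded lbr3] E_inst[OF assms, of X4, unfolded lbr3] E_inst[OF assms, of X5, unfolded lbr3] E_inst[OF assms, of X6, unfolded lbr3] E_inst[OF assms, of X7, unfolded lbr3]
  by (simp_all add: w_def ev_def algebra_simps neg_eq_iff_add_eq_0)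

lemma xo4: "xo (N92 4)" unfolding xo_def lbr4 by simp

lemma eqs4: assumes "eqs (N92 4) s t u"
  shows "s * u X6 = 0" "s * u X7 = 0" "t * u X7 = 0" "s * u X5 = 0" "s * u X4 - t * u X6 = 0" "t * u X5 - s * u X1 = 0" "s * u X2 + t * u X3 = 0"
  using E_inst[OF assms, of X1, unfolded lbr4] E_inst[OF assms, of X2, unfolded lbr4] E_inst[OF assms, of X3, unfolded lbr4] E_inst[OF assms, of X4, unfolded lbr4] E_inst[OF assms, of X5, unfolded lbr4] E_inst[OF assms, of X6, unfolded lbr4] E_inst[OF assms, of X7, unfolded lbr4]
  by (simp_all add: w_def ev_def algebra_simps neg_eq_iff_add_eq_0)

lemma xo5: "xo (N92 5)" unfolding xo_def lbr5 by simp

lemma eqs5: assumes "eqs (N92 5) s t u"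
  shows "s * u X7 = 0" "t * u X6 = 0" "t * u X7 - s * u X4 = 0" "s * u X3 - t * u X5 = 0" "t * u X4 - s * u X6 = 0" "s * u X5 - t * u X2 = 0" "s * u X1 - t * u X3 = 0"
  using E_inst[OF assms, of X1, unfolded lbr5] E_inst[OF assms, of X2, unfolded lbr5] E_inst[OF assms, of X3, unfolded lbr5] E_inst[OF assms, of X4, unfolded lbr5] E_inst[OF assms, of X5, unfolded lbr5] E_inst[OF assms, of X6, unfolded lbr5] E_inst[OF assms, of X7, unfolded lbr5]
  by (simp_all add: w_def ev_def algebra_simps neg_eq_iff_add_eq_0)


lemma solve1: "(s::complex) \<noteq> 0 \<Longrightarrow> s * a + t * b = 0 \<Longrightarrow> a = - t * b / s"
  by (simp add: field_simps eq_neg_iff_add_eq_0 algebra_simps)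
lemma solve2: "(s::complex) \<noteq> 0 \<Longrightarrow> s * a - t * b = 0 \<Longrightarrow> a = t * b / s"
  by (simp add: field_simps)
lemma solve3: "(t::complex) \<noteq> 0 \<Longrightarrow> s * b - t * a = 0 \<Longrightarrow> a = s * b / t"
  by (simp add: field_simps)
lemma solve4: "(s::complex) \<noteq> 0 \<Longrightarrow> t * b - s * a = 0 \<Longrightarrow> a = t * b / s"
  by (simp add: field_simps)

definition p1 :: "complex \<Rightarrow> complex \<Rightarrow> vec9" where
  "p1 s t = (\<lambda>k. case k of X3 \<Rightarrow> s | X6 \<Rightarrow> - t | _ \<Rightarrow> 0)"
definition p2 :: "complex \<Rightarrow> complex \<Rightarrow> vec9" where
  "p2 s t = (\<lambda>k. case k of X2 \<Rightarrow> t | X6 \<Rightarrow> - s | _ \<Rightarrow> 0)"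
definition p3 :: "complex \<Rightarrow> complex \<Rightarrow> vec9" where
  "p3 s t = (\<lambda>k. case k of X3 \<Rightarrow> t * t | X4 \<Rightarrow> s * s | X5 \<Rightarrow> - (s * t) | _ \<Rightarrow> 0)"
definition p4 :: "complex \<Rightarrow> complex \<Rightarrow> vec9" where
  "p4 s t = (\<lambda>k. case k of X3 \<Rightarrow> s | X2 \<Rightarrow> - t | _ \<Rightarrow> 0)"
definition p5 :: "complex \<Rightarrow> complex \<Rightarrow> vec9" where
  "p5 s t = (\<lambda>k. case k of X1 \<Rightarrow> t * t * t | X2 \<Rightarrow> s * s * s | X3 \<Rightarrow> s * t * t | X5 \<Rightarrow> s * s * t | _ \<Rightarrow> 0)"

lemma gen1: assumes s: "s \<noteq> 0" and e: "eqs (N92 1) s t u" shows "u \<in> V.span {p1 s t, ev Y1, ev Y2}"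
proof -
  note e = eqs1[OF e]
  have c: "u X1 = 0" "u X2 = 0" "u X4 = 0" "u X5 = 0" "u X7 = 0" "u X6 = - t * u X3 / s"
    using e s solve1 by auto
  show ?thesis
    apply (rule span3[where a="u X3 / s" and b="u Y1" and c="u Y2"])
    apply (rule ext) subgoal for k by (cases k) (simp_all add: c smul_def ev_def p1_def s)
    done
qed

lemma gen2: assumes s: "s \<noteq> 0" and t: "t \<noteq> 0" and e: "eqs (N92 2) s t u" shows "u \<in> V.span {p2 s t, ev Y1, ev Y2}"
proof -
  note e = eqs2[OF e]
  have e7: "t * u X6 + s * u X2 = 0" using e(7) by (simp add: algebra_simps)
  have c: "u X1 = 0" "u X3 = 0" "u X4 = 0" "u X5 = 0" "u X7 = 0" "u X6 = - s * u X2 / t"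
    using e s t solve1[OF t e7] by auto
  show ?thesis
    apply (rule span3[where a="u X2 / t" and b="u Y1" and c="u Y2"])
    apply (rule ext) subgoal for k by (cases k) (simp_all add: c smul_def ev_def p2_def t)
    done
qed

lemma deg2a: assumes t: "t \<noteq> 0" and e: "eqs (N92 2) 0 t u" shows "u \<in> V.span {ev X2, ev X4, ev X5, ev Y1, ev Y2}"
proof -
  note e = eqs2[OF e]
  have c: "u X1 = 0" "u X3 = 0" "u X6 = 0" "u X7 = 0"
    using e t by auto
  show ?thesis
    apply (rule span5[where a="u X2" and b="u X4" and c="u X5" and d="u Y1" and e="u Y2"])
    apply (rule ext) subgoal for k by (cases k) (simp_all add: c smul_def ev_def)
    done
qed

lemma deg2b: assumes s: "s \<noteq> 0" and e: "eqs (N92 2) s 0 u" shows "u \<in> V.span {ev X1, ev X3, ev X6, ev Y1, ev Y2}"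
proof -
  note e = eqs2[OF e]
  have c: "u X2 = 0" "u X4 = 0" "u X5 = 0" "u X7 = 0"
    using e s by auto
  show ?thesis
    apply (rule span5[where a="u X1" and b="u X3" and c="u X6" and d="u Y1" and e="u Y2"])
    apply (rule ext) subgoal for k by (cases k) (simp_all add: c smul_def ev_def)
    done
qed

lemma gen3: assumes s: "s \<noteq> 0" and e: "eqs (N92 3) s t u" shows "u \<in> V.span {p3 s t, ev Y1, ev Y2}"
proof -
  note e = eqs3[OF e]
  have c0: "u X1 = 0" "u X2 = 0" "u X7 = 0" using e s by auto
  have c1: "u X6 = 0" using e(5) c0 s by simp
  have c2: "u X5 = - t * u X4 / s" using solve1[OF s e(6)] .
  have c3: "u X3 = - t * u X5 / s" using solve1[OF s e(7)] .
  show ?thesis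
    apply (rule span3[where a="u X4 / (s * s)" and b="u Y1" and c="u Y2"])
    apply (rule ext) subgoal for k by (cases k) (simp_all add: c0 c1 c2 c3 smul_def ev_def p3_def s field_simps)
    done
qed

lemma deg3: assumes t: "t \<noteq> 0" and e: "eqs (N92 3) 0 t u" shows "u \<in> V.span {ev X1, ev X2, ev X3, ev Y1, ev Y2}"
proof -
  note e = eqs3[OF e]
  have c: "u X4 = 0" "u X5 = 0" "u X6 = 0" "u X7 = 0"
    using e t by auto
  show ?thesis
    apply (rule span5[where a="u X1" and b="u X2" and c="u X3" and d="u Y1" and e="u Y2"])
    apply (rule ext) subgoal for k by (cases k) (simp_all add: c smul_def ev_def)
    done
qed

lemma gen4: assumes s: "s \<noteq> 0" and e: "eqs (N92 4) s t u" shows "u \<in> V.span {p4 s t, ev Y1, ev Y2}"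
proof -
  note e = eqs4[OF e]
  have c0: "u X5 = 0" "u X6 = 0" "u X7 = 0" using e s by auto
  have c1: "u X4 = 0" "u X1 = 0" using e(5) e(6) c0 s by auto
  have c2: "u X2 = - t * u X3 / s" using solve1[OF s e(7)] .
  show ?thesis
    apply (rule span3[where a="u X3 / s" and b="u Y1" and c="u Y2"])
    apply (rule ext) subgoal for k by (cases k) (simp_all add: c0 c1 c2 smul_def ev_def p4_def s field_simps)
    done
qed

lemma deg4: assumes t: "t \<noteq> 0" and e: "eqs (N92 4) 0 t u" shows "u \<in> V.span {ev X1, ev X2, ev X4, ev Y1, ev Y2}"
proof -
  note e = eqs4[OF e]
  have c: "u X3 = 0" "u X5 = 0" "u X6 = 0" "u X7 = 0"
    using e t by auto
  show ?thesis
    apply (rule span5[where a="u X1" and b="u X2" and c="u X4" and d="u Y1" and e="u Y2"])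
    apply (rule ext) subgoal for k by (cases k) (simp_all add: c smul_def ev_def)
    done
qed

definition G5 :: "complex \<Rightarrow> complex \<Rightarrow> vec9 set" where
  "G5 s t = (if s = 0 then {ev X1, ev Y1, ev Y2} else if t = 0 then {ev X2, ev Y1, ev Y2} else {p5 s t, ev Y1, ev Y2})"

lemma gen5: assumes st: "(s, t) \<noteq> (0, 0)" and e: "eqs (N92 5) s t u" shows "u \<in> V.span (G5 s t)"
proof -
  note e = eqs5[OF e]
  show ?thesis
  proof (cases "s = 0")
    case True
    then have t: "t \<noteq> 0" using st by simp
    have c: "u X2 = 0" "u X3 = 0" "u X4 = 0" "u X5 = 0" "u X6 = 0" "u X7 = 0" using e t True by auto
    show ?thesis unfolding G5_def using True
      apply simp
      apply (rule span3[where a="u X1" and b="u Y1" and c="u Y2"])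
      apply (rule ext) subgoal for k by (cases k) (simp_all add: c smul_def ev_def)
      done
  next
    case s: False
    show ?thesis
    proof (cases "t = 0")
      case True
      have c: "u X1 = 0" "u X3 = 0" "u X4 = 0" "u X5 = 0" "u X6 = 0" "u X7 = 0" using e s True by auto
      show ?thesis unfolding G5_def using True s
        apply simp
        apply (rule span3[where a="u X2" and b="u Y1" and c="u Y2"])
        apply (rule ext) subgoal for k by (cases k) (simp_all add: c smul_def ev_def)
        done
    next
      case t: False
      have c0: "u X7 = 0" "u X6 = 0" using e s t by auto
      have c1: "u X4 = 0" using e(3) c0 s by simp
      have c2: "u X3 = t * u X5 / s" using solve2[OF s e(4)] .
      have c3: "u X2 = s * u X5 / t" using solve3[OF t e(6)] .
      have c4: "u X1 = t * u X3 / s" using solve2[OF s e(7)] .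
      show ?thesis unfolding G5_def using s t
        apply simp
        apply (rule span3[where a="u X5 / (s * s * t)" and b="u Y1" and c="u Y2"])
        apply (rule ext) subgoal for k by (cases k) (simp_all add: c0 c1 c2 c3 c4 smul_def ev_def p5_def field_simps)
        done
    qed
  qed
qed


lemma fin_G5: "finite (G5 s t)" by (simp add: G5_def)
lemma card_G5: "card (G5 s t) \<le> 3" unfolding G5_def by (simp add: card3)

lemma Kcov1: "Kset (N92 1) z \<subseteq> V.span (if center z then {p1 1 0, ev Y1, ev Y2} else if z Y2 \<noteq> 0 then {p1 (z Y2) (- z Y1), ev Y1, ev Y2} else UNIV)"
  using K_cover[of "N92 1" "\<lambda>s t. s \<noteq> 0" "\<lambda>s t. {p1 s t, ev Y1, ev Y2}" "\<lambda>s t. UNIV" 1 0 z]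
    xo1 gen1 V.span_base by auto

lemma Kcov2: "Kset (N92 2) z \<subseteq> V.span (if center z then {p2 1 1, ev Y1, ev Y2}
   else if z Y2 \<noteq> 0 \<and> - z Y1 \<noteq> 0 then {p2 (z Y2) (- z Y1), ev Y1, ev Y2}
   else (if z Y2 = 0 then {ev X2, ev X4, ev X5, ev Y1, ev Y2} else {ev X1, ev X3, ev X6, ev Y1, ev Y2}))"
proof (rule K_cover[of "N92 2" "\<lambda>s t. s \<noteq> 0 \<and> t \<noteq> 0" "\<lambda>s t. {p2 s t, ev Y1, ev Y2}"
      "\<lambda>s t. if s = 0 then {ev X2, ev X4, ev X5, ev Y1, ev Y2} else {ev X1, ev X3, ev X6, ev Y1, ev Y2}" 1 1 z])
  show "xo (N92 2)" by (rule xo2)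
  show "\<And>s t u. s \<noteq> 0 \<and> t \<noteq> 0 \<Longrightarrow> eqs (N92 2) s t u \<Longrightarrow> u \<in> V.span {p2 s t, ev Y1, ev Y2}"
    using gen2 by blast
  show "\<And>s t u. (s, t) \<noteq> (0, 0) \<Longrightarrow> \<not> (s \<noteq> 0 \<and> t \<noteq> 0) \<Longrightarrow> eqs (N92 2) s t u \<Longrightarrow>
     u \<in> V.span (if s = 0 then {ev X2, ev X4, ev X5, ev Y1, ev Y2} else {ev X1, ev X3, ev X6, ev Y1, ev Y2})"
  proof -
    fix s t u assume a: "(s, t) \<noteq> (0, 0)" "\<not> (s \<noteq> 0 \<and> t \<noteq> 0)" "eqs (N92 2) s t u"
    show "u \<in> V.span (if s = 0 then {ev X2, ev X4, ev X5, ev Y1, ev Y2} else {ev X1, ev X3, ev X6, ev Y1, ev Y2})"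
    proof (cases "s = 0")
      case True then show ?thesis using a deg2a[of t u] by simp
    next
      case False then show ?thesis using a deg2b[of s u] by simp
    qed
  qed
qed simp

lemma Kcov3: "Kset (N92 3) z \<subseteq> V.span (if center z then {p3 1 0, ev Y1, ev Y2} else if z Y2 \<noteq> 0 then {p3 (z Y2) (- z Y1), ev Y1, ev Y2} else {ev X1, ev X2, ev X3, ev Y1, ev Y2})"
proof (rule K_cover[of "N92 3" "\<lambda>s t. s \<noteq> 0" "\<lambda>s t. {p3 s t, ev Y1, ev Y2}" "\<lambda>s t. {ev X1, ev X2, ev X3, ev Y1, ev Y2}" 1 0 z])
  show "\<And>s t u. (s, t) \<noteq> (0, 0) \<Longrightarrow> \<not> s \<noteq> 0 \<Longrightarrow> eqs (N92 3) s t u \<Longrightarrow> u \<in> V.span {ev X1, ev X2, ev X3, ev Y1, ev Y2}"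
    using deg3 by auto
qed (use xo3 gen3 in auto)

lemma Kcov4: "Kset (N92 4) z \<subseteq> V.span (if center z then {p4 1 0, ev Y1, ev Y2} else if z Y2 \<noteq> 0 then {p4 (z Y2) (- z Y1), ev Y1, ev Y2} else {ev X1, ev X2, ev X4, ev Y1, ev Y2})"
proof (rule K_cover[of "N92 4" "\<lambda>s t. s \<noteq> 0" "\<lambda>s t. {p4 s t, ev Y1, ev Y2}" "\<lambda>s t. {ev X1, ev X2, ev X4, ev Y1, ev Y2}" 1 0 z])
  show "\<And>s t u. (s, t) \<noteq> (0, 0) \<Longrightarrow> \<not> s \<noteq> 0 \<Longrightarrow> eqs (N92 4) s t u \<Longrightarrow> u \<in> V.span {ev X1, ev X2, ev X4, ev Y1, ev Y2}"
    using deg4 by auto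
qed (use xo4 gen4 in auto)

lemma Kcov5: "Kset (N92 5) z \<subseteq> V.span (if center z then G5 1 0 else if (z Y2, - z Y1) \<noteq> (0, 0) then G5 (z Y2) (- z Y1) else {})"
  by (rule K_cover[of "N92 5" "\<lambda>s t. (s, t) \<noteq> (0, 0)" G5 "\<lambda>s t. {}" 1 0 z]) (use xo5 gen5 in auto)

lemma card3_5: "card {a, b, c} < 5" using card3[of a b c] by simp
lemma card3_7: "card {a, b, c} < 7" using card3[of a b c] by simp
lemma card5_7: "card {a, b, c, d, e} < 7" using card5[of a b c d e] by simp
lemma cardG5_5: "card (G5 s t) < 5" using card_G5[of s t] by simp
lemma cardG5_7: "card (G5 s t) < 7" using card_G5[of s t] by simp

lemma F1_2: "\<not> bigK (N92 2) 7 z"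
  by (rule no_big[OF Kcov2]) (simp_all add: card3_7 card5_7)
lemma F1_3: "\<not> bigK (N92 3) 7 z"
  by (rule no_big[OF Kcov3]) (simp_all add: card3_7 card5_7)
lemma F1_4: "\<not> bigK (N92 4) 7 z"
  by (rule no_big[OF Kcov4]) (simp_all add: card3_7 card5_7)
lemma F1_5: "\<not> bigK (N92 5) 7 z"
  by (rule no_big[OF Kcov5]) (simp_all add: cardG5_7 fin_G5)
lemma F2_5: "\<not> bigK (N92 5) 5 z"
  by (rule no_big[OF Kcov5]) (simp_all add: cardG5_5 fin_G5)


lemma F3_3: assumes b: "bigK (N92 3) 5 z" shows "\<exists>a. a \<noteq> 0 \<and> z = smul a (ev Y1)"
proof -
  have nc: "\<not> center z"
  proof
    assume c: "center z"
    have "Kset (N92 3) z \<subseteq> V.span {p3 1 0, ev Y1, ev Y2}" using Kcov3[of z] c by simp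
    from no_big[OF this _ card3_5] b show False by simp
  qed
  have y2: "z Y2 = 0"
  proof (rule ccontr)
    assume c: "z Y2 \<noteq> 0"
    have "Kset (N92 3) z \<subseteq> V.span {p3 (z Y2) (- z Y1), ev Y1, ev Y2}" using Kcov3[of z] c nc by simp
    from no_big[OF this _ card3_5] b show False by simp
  qed
  from nc y2 have x: "\<And>k. k \<noteq> Y1 \<Longrightarrow> k \<noteq> Y2 \<Longrightarrow> z k = 0" and y1: "z Y1 \<noteq> 0" by (auto simp: center_def)
  have "z = smul (z Y1) (ev Y1)"
    apply (rule ext) subgoal for k by (cases k) (simp_all add: x y2 smul_def ev_def)
    done
  with y1 show ?thesis by blast
qed

lemma F3_4: assumes b: "bigK (N92 4) 5 z" shows "\<exists>a. a \<noteq> 0 \<and> z = smul a (ev Y1)"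
proof -
  have nc: "\<not> center z"
  proof
    assume c: "center z"
    have "Kset (N92 4) z \<subseteq> V.span {p4 1 0, ev Y1, ev Y2}" using Kcov4[of z] c by simp
    from no_big[OF this _ card3_5] b show False by simp
  qed
  have y2: "z Y2 = 0"
  proof (rule ccontr)
    assume c: "z Y2 \<noteq> 0"
    have "Kset (N92 4) z \<subseteq> V.span {p4 (z Y2) (- z Y1), ev Y1, ev Y2}" using Kcov4[of z] c nc by simp
    from no_big[OF this _ card3_5] b show False by simp
  qed
  from nc y2 have x: "\<And>k. k \<noteq> Y1 \<Longrightarrow> k \<noteq> Y2 \<Longrightarrow> z k = 0" and y1: "z Y1 \<noteq> 0" by (auto simp: center_def)
  have "z = smul (z Y1) (ev Y1)"
    apply (rule ext) subgoal for k by (cases k) (simp_all add: x y2 smul_def ev_def)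
    done
  with y1 show ?thesis by blast
qed

lemma eqs4_coords: assumes e: "eqs (N92 4) s t u" and st: "(s, t) \<noteq> (0, 0)"
  shows "u X5 = 0 \<and> u X6 = 0 \<and> u X7 = 0"
proof (cases "s = 0")
  case True
  then have "t \<noteq> 0" using st by simp
  then show ?thesis using eqs4[OF e] True by auto
next
  case False
  then show ?thesis using eqs4[OF e] by auto
qed

lemma K4_coords: assumes u: "u \<in> Kset (N92 4) z" shows "u X5 = 0 \<and> u X6 = 0 \<and> u X7 = 0"
proof (cases "center z")
  case True
  show ?thesis using eqs4_coords[OF K_center[OF xo4 u True, of 1 0]] by simp
next
  case False
  then have "(z Y2, - z Y1) \<noteq> (0, 0)" by (auto simp: center_def)
  then show ?thesis using eqs4_coords[OF K_eqs[OF u]] by simp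
qed

lemma F4: assumes "u \<in> Kset (N92 4) z" "v \<in> Kset (N92 4) z" shows "lbr (N92 4) u v = 0"
  using K4_coords[OF assms(1)] K4_coords[OF assms(2)] unfolding lbr4 by (auto simp: w_def fun_eq_iff)

definition Inv1 where "Inv1 c \<longleftrightarrow> (\<exists>z. bigK c 7 z)"
definition Inv2 where "Inv2 c \<longleftrightarrow> (\<exists>z. bigK c 5 z)"
definition Inv3 where "Inv3 c \<longleftrightarrow> (\<exists>z1 z2. (\<forall>a. z1 \<noteq> smul a z2) \<and> bigK c 5 z1 \<and> bigK c 5 z2)"
definition InvQ where "InvQ c \<longleftrightarrow> (\<exists>z u v. u \<in> Kset c z \<and> v \<in> Kset c z \<and> lbr c u v \<noteq> 0)"

lemma T1: "isoP f c d \<Longrightarrow> Inv1 c \<Longrightarrow> Inv1 d"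
  unfolding Inv1_def using iso_bigK by blast
lemma T2: "isoP f c d \<Longrightarrow> Inv2 c \<Longrightarrow> Inv2 d"
  unfolding Inv2_def using iso_bigK by blast
lemma T3: assumes h: "isoP f c d" and "Inv3 c" shows "Inv3 d"
proof -
  obtain z1 z2 where z: "\<forall>a. z1 \<noteq> smul a z2" "bigK c 5 z1" "bigK c 5 z2" using assms(2) Inv3_def by blast
  have inj: "inj f" using h by (simp add: isoP_def bij_is_inj)
  have "\<forall>a. f z1 \<noteq> smul a (f z2)"
  proof
    fix a show "f z1 \<noteq> smul a (f z2)"
    proof
      assume "f z1 = smul a (f z2)"
      then have "f z1 = f (smul a z2)" using iso_smul[OF h] by simp
      then have "z1 = smul a z2" using inj by (simp add: inj_eq)
      then show False using z(1) by blast
    qed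
  qed
  then show ?thesis unfolding Inv3_def using iso_bigK[OF h z(2)] iso_bigK[OF h z(3)] by blast
qed
lemma TQ: assumes h: "isoP f c d" and "InvQ c" shows "InvQ d"
proof -
  obtain z u v where z: "u \<in> Kset c z" "v \<in> Kset c z" "lbr c u v \<noteq> 0" using assms(2) InvQ_def by blast
  have inj: "inj f" using h by (simp add: isoP_def bij_is_inj)
  have e: "lbr d (f u) (f v) = f (lbr c u v)" using h by (simp add: isoP_def)
  have "f (lbr c u v) \<noteq> 0" using z(3) inj iso_zero[OF h] by (metis injD)
  then have "lbr d (f u) (f v) \<noteq> 0" using e by simp
  moreover have "f u \<in> Kset d (f z)" "f v \<in> Kset d (f z)" using iso_Kset[OF h] z by blast+
  ultimately show ?thesis unfolding InvQ_def by blast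
qed

lemma sep:
  assumes T: "\<And>f c d. isoP f c d \<Longrightarrow> P c \<Longrightarrow> P d" and "P c" "\<not> P d"
  shows "\<not> lie_isomorphic c d \<and> \<not> lie_isomorphic d c"
  using assms iso_sym unfolding lie_iso_iff by metis

lemma inK1: assumes "\<And>v k. k \<noteq> Y1 \<Longrightarrow> lbr c u v k = 0" shows "u \<in> Kset c (ev Y1)"
  unfolding Kset_def
proof (intro CollectI allI)
  fix v
  have "lbr c u v = smul (lbr c u v Y1) (ev Y1)"
    using assms by (auto simp: fun_eq_iff smul_def ev_def)
  then show "\<exists>a. lbr c u v = smul a (ev Y1)" by blast
qed

lemma inK2: assumes "\<And>v k. k \<noteq> Y2 \<Longrightarrow> lbr c u v k = 0" shows "u \<in> Kset c (ev Y2)"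
  unfolding Kset_def
proof (intro CollectI allI)
  fix v
  have "lbr c u v = smul (lbr c u v Y2) (ev Y2)"
    using assms by (auto simp: fun_eq_iff smul_def ev_def)
  then show "\<exists>a. lbr c u v = smul a (ev Y2)" by blast
qed

lemma bigK_ev: assumes "\<And>a. a \<in> A \<Longrightarrow> ev a \<in> Kset c z" "card A = m" shows "bigK c m z"
  unfolding bigK_def
proof (intro exI conjI)
  show "ev ` A \<subseteq> Kset c z" using assms(1) by blast
  show "V.independent (ev ` A)" by (rule indep_ev)
  show "finite (ev ` A)" by simp
  show "card (ev ` A) = m" using assms(2) card_image[OF inj_on_subset[OF ev_inj]] by simp
qed

lemma W1: "Inv1 (N92 1)"
  unfolding Inv1_def
proof (intro exI[of _ "ev Y1"] bigK_ev[of "{X1, X2, X4, X5, X6, Y1, Y2}"])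
  fix a assume "a \<in> {X1, X2, X4, X5, X6, Y1, Y2}"
  then show "ev a \<in> Kset (N92 1) (ev Y1)"
    by (intro inK1) (unfold lbr1, auto simp: w_def ev_def)
qed simp

lemma W2_1: "Inv2 (N92 1)"
  unfolding Inv2_def
proof (intro exI[of _ "ev Y1"] bigK_ev[of "{X1, X2, X4, Y1, Y2}"])
  fix a assume "a \<in> {X1, X2, X4, Y1, Y2}"
  then show "ev a \<in> Kset (N92 1) (ev Y1)"
    by (intro inK1) (unfold lbr1, auto simp: w_def ev_def)
qed simp

lemma W2_2a: "bigK (N92 2) 5 (ev Y1)"
proof (intro bigK_ev[of "{X2, X4, X5, Y1, Y2}"])
  fix a assume "a \<in> {X2, X4, X5, Y1, Y2}"
  then show "ev a \<in> Kset (N92 2) (ev Y1)"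
    by (intro inK1) (unfold lbr2, auto simp: w_def ev_def)
qed simp

lemma W2_2b: "bigK (N92 2) 5 (ev Y2)"
proof (intro bigK_ev[of "{X1, X3, X6, Y1, Y2}"])
  fix a assume "a \<in> {X1, X3, X6, Y1, Y2}"
  then show "ev a \<in> Kset (N92 2) (ev Y2)"
    by (intro inK2) (unfold lbr2, auto simp: w_def ev_def)
qed simp

lemma W2_3: "bigK (N92 3) 5 (ev Y1)"
proof (intro bigK_ev[of "{X1, X2, X3, Y1, Y2}"])
  fix a assume "a \<in> {X1, X2, X3, Y1, Y2}"
  then show "ev a \<in> Kset (N92 3) (ev Y1)"
    by (intro inK1) (unfold lbr3, auto simp: w_def ev_def)
qed simp

lemma W2_4: "bigK (N92 4) 5 (ev Y1)"
proof (intro bigK_ev[of "{X1, X2, X4, Y1, Y2}"])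
  fix a assume "a \<in> {X1, X2, X4, Y1, Y2}"
  then show "ev a \<in> Kset (N92 4) (ev Y1)"
    by (intro inK1) (unfold lbr4, auto simp: w_def ev_def)
qed simp

lemma W3_2: "Inv3 (N92 2)"
  unfolding Inv3_def
proof (intro exI conjI)
  show "\<forall>a. ev Y1 \<noteq> smul a (ev Y2)" by (auto simp: fun_eq_iff smul_def ev_def)
qed (rule W2_2a, rule W2_2b)

lemma WQ_3: "InvQ (N92 3)"
  unfolding InvQ_def
proof (intro exI conjI)
  show "ev X1 \<in> Kset (N92 3) (ev Y1)" by (intro inK1) (unfold lbr3, auto simp: w_def ev_def)
  show "ev X2 \<in> Kset (N92 3) (ev Y1)" by (intro inK1) (unfold lbr3, auto simp: w_def ev_def)
  show "lbr (N92 3) (ev X1) (ev X2) \<noteq> 0" unfolding lbr3 by (auto simp: w_def ev_def fun_eq_iff)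
qed

lemma N1_2: "\<not> Inv1 (N92 2)" using F1_2 Inv1_def by blast
lemma N1_3: "\<not> Inv1 (N92 3)" using F1_3 Inv1_def by blast
lemma N1_4: "\<not> Inv1 (N92 4)" using F1_4 Inv1_def by blast
lemma N1_5: "\<not> Inv1 (N92 5)" using F1_5 Inv1_def by blast
lemma N2_5: "\<not> Inv2 (N92 5)" using F2_5 Inv2_def by blast

lemma N3_3: "\<not> Inv3 (N92 3)"
proof
  assume "Inv3 (N92 3)"
  then obtain z1 z2 where z: "\<forall>a. z1 \<noteq> smul a z2" "bigK (N92 3) 5 z1" "bigK (N92 3) 5 z2"
    unfolding Inv3_def by blast
  obtain a1 where a1: "z1 = smul a1 (ev Y1)" using F3_3[OF z(2)] by blast
  obtain a2 where a2: "a2 \<noteq> 0" "z2 = smul a2 (ev Y1)" using F3_3[OF z(3)] by blast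
  have "z1 = smul (a1 / a2) z2" using a1 a2 by (auto simp: smul_def fun_eq_iff)
  then show False using z(1) by blast
qed

lemma N3_4: "\<not> Inv3 (N92 4)"
proof
  assume "Inv3 (N92 4)"
  then obtain z1 z2 where z: "\<forall>a. z1 \<noteq> smul a z2" "bigK (N92 4) 5 z1" "bigK (N92 4) 5 z2"
    unfolding Inv3_def by blast
  obtain a1 where a1: "z1 = smul a1 (ev Y1)" using F3_4[OF z(2)] by blast
  obtain a2 where a2: "a2 \<noteq> 0" "z2 = smul a2 (ev Y1)" using F3_4[OF z(3)] by blast
  have "z1 = smul (a1 / a2) z2" using a1 a2 by (auto simp: smul_def fun_eq_iff)
  then show False using z(1) by blast
qed

lemma NQ_4: "\<not> InvQ (N92 4)" unfolding InvQ_def using F4 by blast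

lemma W2_2: "Inv2 (N92 2)" using W2_2a Inv2_def by blast
lemma W2_3': "Inv2 (N92 3)" using W2_3 Inv2_def by blast
lemma W2_4': "Inv2 (N92 4)" using W2_4 Inv2_def by blast

lemma S1: "\<not> Inv1 d \<Longrightarrow> \<not> lie_isomorphic (N92 1) d \<and> \<not> lie_isomorphic d (N92 1)"
  using T1 W1 by (intro sep[where P = Inv1]) blast+
lemma S2: "Inv2 c \<Longrightarrow> \<not> lie_isomorphic c (N92 5) \<and> \<not> lie_isomorphic (N92 5) c"
  using T2 N2_5 by (intro sep[where P = Inv2]) blast+
lemma S3: "\<not> Inv3 d \<Longrightarrow> \<not> lie_isomorphic (N92 2) d \<and> \<not> lie_isomorphic d (N92 2)"
  using T3 W3_2 by (intro sep[where P = Inv3]) blast+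
lemma SQ: "\<not> lie_isomorphic (N92 3) (N92 4) \<and> \<not> lie_isomorphic (N92 4) (N92 3)"
  using TQ WQ_3 NQ_4 by (intro sep[where P = InvQ]) blast+

theorem theorem3:
  assumes "i \<in> {1..5::nat}" and "j \<in> {1..5::nat}" and "i \<noteq> j"
  shows "\<not> lie_isomorphic (N92 i) (N92 j)"
proof -
  have i: "i = 1 \<or> i = 2 \<or> i = 3 \<or> i = 4 \<or> i = 5" using assms(1) by auto
  have j: "j = 1 \<or> j = 2 \<or> j = 3 \<or> j = 4 \<or> j = 5" using assms(2) by auto
  show ?thesis
    using i j assms(3) S1[OF N1_2] S1[OF N1_3] S1[OF N1_4] S1[OF N1_5]
      S2[OF W2_1] S2[OF W2_2] S2[OF W2_3'] S2[OF W2_4']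
      S3[OF N3_3] S3[OF N3_4] SQ
    by auto
qed

end
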